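(* Let $N$ be a positive integer, $L>0$, and $\zeta=(\zeta_0,\dots,\zeta_{N+2})\in\mathbb{R}^{N+3}$ with $\zeta_0>\zeta_1>\dots>\zeta_{N+1}>\zeta_{N+2}=0$. With $f_k$ and $W^\zeta$ as defined in the context and $W^{\zeta,*}=\min_{y\in\mathbb{R}^{N+1}}W^\zeta(y)$, if $\bar y=(\bar y_0,\dots,\bar y_N)\in\mathbb{R}^{N+1}$ satisfies $\bar y_k\geq 0$ for some $k\in\{0,\dots,N\}$, then \[ W^\zeta(\bar y)-W^{\zeta,*}\geq f_k. \]
   Context: Let $e_0,\dots,e_N$ denote the standard unit vectors of $\mathbb{R}^{N+1}$ (zero-based indexing). Define for $i=0,\dots,N+1$: $x_i=-\sum_{j=0}^{i-1}\frac{\zeta_j-\zeta_{i+1}}{\sqrt{\zeta_j-\zeta_{j+1}}}e_j\in\mathbb{R}^{N+1}$; $g_i=L\sqrt{\zeta_i-\zeta_{i+1}}\,e_i$ for $i=0,\dots,N$ and $g_{N+1}=0$; $f_i=\frac L2(\zeta_i+\zeta_{i+1})$ for $i=0,\dots,N$ and $f_{N+1}=0$. For $y\in\mathbb{R}^{N+1}$, $\nu\in\mathbb{R}^{N+1}$, $\alpha=(\alpha_0,\dots,\alpha_{N+1})\in\mathbb{R}^{N+2}$ let $w^\zeta(y,\nu,\alpha)=\frac L2\|y+\nu-\sum_{i=0}^{N+1}\alpha_i(x_i-\frac1Lg_i)\|^2+\sum_{i=0}^{N+1}\alpha_i(f_i-\frac1{2L}\|g_i\|^2)$, and $W^\zeta(y)=\min\{w^\zeta(y,\nu,\alpha):\nu\in\mathbb{R}^{N+1}_+,\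 \alpha\in\Delta_{N+2}\}$, where $\mathbb{R}^{N+1}_+$ is the nonnegative orthant and $\Delta_{N+2}=\{\alpha\in\mathbb{R}^{N+2}:\alpha_i\geq0,\ \sum_i\alpha_i=1\}$. *)

theory Defs
  imports Complex_Main
begin

text \<open>Vectors of R^(N+1) are represented as functions nat => real; only the
components 0..N are used. zeta :: nat => real, only zeta 0 .. zeta (N+2) used.\<close>

definition xv :: "nat \<Rightarrow> (nat \<Rightarrow> real) \<Rightarrow> nat \<Rightarrow> nat \<Rightarrow> real" where
  "xv N \<zeta> i j = (if j < i \<and> j \<le> N
      then - ((\<zeta> j - \<zeta> (Suc i)) / sqrt (\<zeta> j - \<zeta> (Suc j))) else 0)"

definition gv :: "nat \<Rightarrow> real \<Rightarrow> (nat \<Rightarrow> real) \<Rightarrow> nat \<Rightarrow> nat \<Rightarrow> real" where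
  "gv N L \<zeta> i j = (if j = i \<and> i \<le> N then L * sqrt (\<zeta> i - \<zeta> (Suc i)) else 0)"

definition fv :: "nat \<Rightarrow> real \<Rightarrow> (nat \<Rightarrow> real) \<Rightarrow> nat \<Rightarrow> real" where
  "fv N L \<zeta> i = (if i \<le> N then L / 2 * (\<zeta> i + \<zeta> (Suc i)) else 0)"

definition sqnorm :: "nat \<Rightarrow> (nat \<Rightarrow> real) \<Rightarrow> real" where
  "sqnorm N v = (\<Sum>j\<le>N. (v j)\<^sup>2)"

definition wfun :: "nat \<Rightarrow> real \<Rightarrow> (nat \<Rightarrow> real) \<Rightarrow> (nat \<Rightarrow> real) \<Rightarrow> (nat \<Rightarrow> real)
    \<Rightarrow> (nat \<Rightarrow> real) \<Rightarrow> real" where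
  "wfun N L \<zeta> y \<nu> \<alpha> =
     L / 2 * sqnorm N (\<lambda>j. y j + \<nu> j
        - (\<Sum>i\<le>Suc N. \<alpha> i * (xv N \<zeta> i j - gv N L \<zeta> i j / L)))
     + (\<Sum>i\<le>Suc N. \<alpha> i * (fv N L \<zeta> i - sqnorm N (gv N L \<zeta> i) / (2 * L)))"

definition Wfun :: "nat \<Rightarrow> real \<Rightarrow> (nat \<Rightarrow> real) \<Rightarrow> (nat \<Rightarrow> real) \<Rightarrow> real" where
  "Wfun N L \<zeta> y = Inf {wfun N L \<zeta> y \<nu> \<alpha> | \<nu> \<alpha>.
      (\<forall>j\<le>N. 0 \<le> \<nu> j) \<and> (\<forall>i\<le>Suc N. 0 \<le> \<alpha> i) \<and> (\<Sum>i\<le>Suc N. \<alpha> i) = 1}"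

definition Wstar :: "nat \<Rightarrow> real \<Rightarrow> (nat \<Rightarrow> real) \<Rightarrow> real" where
  "Wstar N L \<zeta> = Inf (range (Wfun N L \<zeta>))"

end

theory Submission
  imports Defs
begin

lemma zmono:
  fixes \<zeta> :: "nat \<Rightarrow> real"
  assumes h: "\<forall>i\<le>Suc N. \<zeta> (Suc i) < \<zeta> i" and mn: "m \<le> n" and n: "n \<le> Suc (Suc N)"
  shows "\<zeta> n \<le> \<zeta> m"
  using mn n
proof (induction rule: dec_induct)
  case base then show ?case by simp
next
  case (step n)
  then have "\<zeta> (Suc n) < \<zeta> n" using h by auto
  then show ?case using step by auto
qed

lemma comp_k:
  assumes "L > 0" and "k \<le> N" and "\<zeta> (Suc k) < \<zeta> k" and "i \<le> Suc N"
  shows "xv N \<zeta> i k - gv N L \<zeta> i k / L =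
    (if k \<le> i then (\<zeta> (Suc i) - \<zeta> k) / sqrt (\<zeta> k - \<zeta> (Suc k)) else 0)"
proof (cases "i = k")
  case True
  have p: "sqrt (\<zeta> k - \<zeta> (Suc k)) > 0" using assms by simp
  have "- sqrt (\<zeta> k - \<zeta> (Suc k)) = (\<zeta> (Suc k) - \<zeta> k) / sqrt (\<zeta> k - \<zeta> (Suc k))"
    using p assms by (simp add: field_simps)
  then show ?thesis using True assms by (simp add: xv_def gv_def)
next
  case False
  have p: "sqrt (\<zeta> k - \<zeta> (Suc k)) > 0" using assms by simp
  show ?thesis using assms False p by (auto simp: xv_def gv_def field_simps)
qed

lemma cterm:
  assumes "L > 0" and "i \<le> Suc N" and "\<zeta> (Suc (Suc N)) = 0" and "\<zeta> (Suc i) \<le> \<zeta> i"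
  shows "fv N L \<zeta> i - sqnorm N (gv N L \<zeta> i) / (2 * L) = L * \<zeta> (Suc i)"
proof (cases "i \<le> N")
  case True
  have "sqnorm N (gv N L \<zeta> i) = (\<Sum>j\<le>N. if j = i then (L * sqrt (\<zeta> i - \<zeta> (Suc i)))\<^sup>2 else 0)"
    unfolding sqnorm_def by (rule sum.cong) (auto simp: gv_def)
  then have "sqnorm N (gv N L \<zeta> i) = (L * sqrt (\<zeta> i - \<zeta> (Suc i)))\<^sup>2"
    using True unfolding sqnorm_def by (simp add: sum.delta)
  also have "\<dots> = L\<^sup>2 * (\<zeta> i - \<zeta> (Suc i))" using assms by (simp add: power_mult_distrib)
  finally show ?thesis using True assms by (simp add: fv_def power2_eq_square field_simps)
next
  case False
  then have iN: "i = Suc N" using assms by auto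
  show ?thesis unfolding iN using assms by (simp add: fv_def gv_def sqnorm_def)
qed

lemma wnonneg:
  assumes L: "L > 0" and h: "\<forall>i\<le>Suc N. \<zeta> (Suc i) < \<zeta> i" and z: "\<zeta> (Suc (Suc N)) = 0"
    and a: "\<forall>i\<le>Suc N. 0 \<le> \<alpha> i"
  shows "0 \<le> wfun N L \<zeta> y \<nu> \<alpha>"
proof -
  have "0 \<le> (\<Sum>i\<le>Suc N. \<alpha> i * (fv N L \<zeta> i - sqnorm N (gv N L \<zeta> i) / (2 * L)))"
  proof (rule sum_nonneg)
    fix i assume i: "i \<in> {..Suc N}"
    have "0 \<le> \<zeta> (Suc i)" using zmono[OF h, of "Suc i" "Suc (Suc N)"] i z by auto
    then show "0 \<le> \<alpha> i * (fv N L \<zeta> i - sqnorm N (gv N L \<zeta> i) / (2 * L))"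
      using cterm[of L i N \<zeta>, OF L _ z] h i a L by auto
  qed
  moreover have "0 \<le> sqnorm N v" for v by (simp add: sqnorm_def sum_nonneg)
  ultimately show ?thesis using L unfolding wfun_def by (intro add_nonneg_nonneg) auto
qed

lemma wlow:
  assumes L: "L > 0" and h: "\<forall>i\<le>Suc N. \<zeta> (Suc i) < \<zeta> i" and z: "\<zeta> (Suc (Suc N)) = 0"
    and k: "k \<le> N" and yk: "y k \<ge> 0" and nu: "\<forall>j\<le>N. 0 \<le> \<nu> j"
    and a: "\<forall>i\<le>Suc N. 0 \<le> \<alpha> i" and s1: "(\<Sum>i\<le>Suc N. \<alpha> i) = 1"
  shows "fv N L \<zeta> k \<le> wfun N L \<zeta> y \<nu> \<alpha>"
proof -
  define D where "D = \<zeta> k - \<zeta> (Suc k)"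
  have Dp: "D > 0" using h k by (auto simp: D_def)
  define S where "S = (\<Sum>i\<le>Suc N. \<alpha> i * (if k \<le> i then \<zeta> k - \<zeta> (Suc i) else 0))"
  have S0: "S \<ge> 0" unfolding S_def
  proof (rule sum_nonneg)
    fix i assume i: "i \<in> {..Suc N}"
    have "k \<le> i \<Longrightarrow> \<zeta> (Suc i) \<le> \<zeta> k" using zmono[OF h, of k "Suc i"] i by auto
    then show "0 \<le> \<alpha> i * (if k \<le> i then \<zeta> k - \<zeta> (Suc i) else 0)" using a i by auto
  qed
  have hk: "\<zeta> (Suc k) < \<zeta> k" using h k by auto
  have comp: "(\<Sum>i\<le>Suc N. \<alpha> i * (xv N \<zeta> i k - gv N L \<zeta> i k / L)) = - S / sqrt D"
  proof -
    have "(\<Sum>i\<le>Suc N. \<alpha> i * (xv N \<zeta> i k - gv N L \<zeta> i k / L))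
       = (\<Sum>i\<le>Suc N. \<alpha> i * (if k \<le> i then \<zeta> k - \<zeta> (Suc i) else 0) * (- 1 / sqrt D))"
      by (rule sum.cong) (use Dp in \<open>auto simp: comp_k[OF L k hk] D_def field_simps\<close>)
    also have "\<dots> = - S / sqrt D" unfolding sum_distrib_right[symmetric] S_def[symmetric] by simp
    finally show ?thesis .
  qed
  define v where "v = (\<lambda>j. y j + \<nu> j - (\<Sum>i\<le>Suc N. \<alpha> i * (xv N \<zeta> i j - gv N L \<zeta> i j / L)))"
  have vk: "v k = y k + \<nu> k + S / sqrt D" using comp by (simp add: v_def)
  have "S / sqrt D \<le> v k" using vk yk nu k by auto
  moreover have "0 \<le> S / sqrt D" using S0 Dp by simp
  ultimately have "(S / sqrt D)\<^sup>2 \<le> (v k)\<^sup>2" by (simp add: power_mono)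
  also have "\<dots> \<le> sqnorm N v" unfolding sqnorm_def
    using k by (intro member_le_sum) auto
  finally have q1: "S\<^sup>2 / D \<le> sqnorm N v" using Dp by (simp add: power_divide)
  have q2: "L * (\<zeta> k - S) \<le> (\<Sum>i\<le>Suc N. \<alpha> i * (fv N L \<zeta> i - sqnorm N (gv N L \<zeta> i) / (2 * L)))"
  proof -
    have e1: "(\<Sum>i\<le>Suc N. \<alpha> i * (fv N L \<zeta> i - sqnorm N (gv N L \<zeta> i) / (2 * L)))
        = L * (\<Sum>i\<le>Suc N. \<alpha> i * \<zeta> (Suc i))"
      unfolding sum_distrib_left
    proof (rule sum.cong)
      fix i assume i: "i \<in> {..Suc N}"
      then show "\<alpha> i * (fv N L \<zeta> i - sqnorm N (gv N L \<zeta> i) / (2 * L)) = L * (\<alpha> i * \<zeta> (Suc i))"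
        using cterm[of L i N \<zeta>, OF L _ z] h by auto
    qed simp
    have "\<zeta> k - S \<le> (\<Sum>i\<le>Suc N. \<alpha> i * \<zeta> (Suc i))"
    proof -
      have "\<zeta> k = (\<Sum>i\<le>Suc N. \<alpha> i * \<zeta> k)" using s1 by (simp add: sum_distrib_right[symmetric])
      also have "\<dots> \<le> (\<Sum>i\<le>Suc N. \<alpha> i * \<zeta> (Suc i) + \<alpha> i * (if k \<le> i then \<zeta> k - \<zeta> (Suc i) else 0))"
      proof (rule sum_mono)
        fix i assume i: "i \<in> {..Suc N}"
        show "\<alpha> i * \<zeta> k \<le> \<alpha> i * \<zeta> (Suc i) + \<alpha> i * (if k \<le> i then \<zeta> k - \<zeta> (Suc i) else 0)"
        proof (cases "k \<le> i")
          case True then show ?thesis by (simp add: algebra_simps)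
        next
          case False
          then have "\<zeta> k \<le> \<zeta> (Suc i)" using zmono[OF h, of "Suc i" k] k by auto
          then show ?thesis using False a i by (simp add: mult_left_mono)
        qed
      qed
      also have "\<dots> = (\<Sum>i\<le>Suc N. \<alpha> i * \<zeta> (Suc i)) + S" unfolding S_def by (simp add: sum.distrib)
      finally show ?thesis by simp
    qed
    then have "L * (\<zeta> k - S) \<le> L * (\<Sum>i\<le>Suc N. \<alpha> i * \<zeta> (Suc i))"
      using L by (intro mult_left_mono) auto
    with e1 show ?thesis by linarith
  qed
  have key: "L / 2 * (\<zeta> k + \<zeta> (Suc k)) \<le> L / 2 * (S\<^sup>2 / D) + L * (\<zeta> k - S)"
  proof -
    have "2 * S - D \<le> S\<^sup>2 / D"
    proof -
      have "(2 * S - D) * D \<le> S\<^sup>2" using sum_squares_ge_zero[of "S - D" 0]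
        by (simp add: power2_eq_square algebra_simps)
      then show ?thesis using Dp by (simp add: pos_le_divide_eq)
    qed
    then have "L / 2 * (2 * S - D) \<le> L / 2 * (S\<^sup>2 / D)" using L by (intro mult_left_mono) auto
    then show ?thesis by (simp add: D_def algebra_simps)
  qed
  have "L / 2 * (S\<^sup>2 / D) \<le> L / 2 * sqnorm N v" using q1 L by (intro mult_left_mono) auto
  then show ?thesis using key q2 k unfolding wfun_def v_def[symmetric] fv_def by simp
qed

theorem corollary2:
  fixes N :: nat and L :: real and \<zeta> :: "nat \<Rightarrow> real" and ybar :: "nat \<Rightarrow> real" and k :: nat
  assumes "N \<ge> 1" and "L > 0"
    and "\<forall>i\<le>Suc N. \<zeta> (Suc i) < \<zeta> i" and "\<zeta> (Suc (Suc N)) = 0"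
    and "k \<le> N" and "ybar k \<ge> 0"
  shows "Wfun N L \<zeta> ybar - Wstar N L \<zeta> \<ge> fv N L \<zeta> k"
proof -
  define A where "A = (\<lambda>y. {wfun N L \<zeta> y \<nu> \<alpha> | \<nu> \<alpha>.
      (\<forall>j\<le>N. 0 \<le> \<nu> j) \<and> (\<forall>i\<le>Suc N. 0 \<le> \<alpha> i) \<and> (\<Sum>i\<le>Suc N. \<alpha> i) = 1})"
  have W: "Wfun N L \<zeta> y = Inf (A y)" for y by (simp add: Wfun_def A_def)
  have ne: "A y \<noteq> {}" for y
  proof -
    have "wfun N L \<zeta> y (\<lambda>_. 0) (\<lambda>i. if i = 0 then 1 else 0) \<in> A y"
      unfolding A_def
      by (rule CollectI, rule exI[of _ "\<lambda>_. 0"], rule exI[of _ "\<lambda>i. if i = 0 then 1 else 0"])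
        (auto simp: sum.delta)
    then show ?thesis by auto
  qed
  have lb: "\<And>t. t \<in> A y \<Longrightarrow> 0 \<le> t" for y
    unfolding A_def using wnonneg[OF assms(2,3,4)] by auto
  have bdd: "bdd_below (A y)" for y using lb by (auto simp: bdd_below_def)
  have W0: "0 \<le> Wfun N L \<zeta> y" for y unfolding W using ne lb by (intro cInf_greatest) auto
  define y0 where "y0 = (\<lambda>j. xv N \<zeta> (Suc N) j)"
  define e where "e = (\<lambda>i::nat. if i = Suc N then 1 else (0::real))"
  have "wfun N L \<zeta> y0 (\<lambda>_. 0) e = 0"
  proof -
    have s1: "(\<Sum>i\<le>Suc N. e i * (xv N \<zeta> i j - gv N L \<zeta> i j / L)) = xv N \<zeta> (Suc N) j" for j
      by (simp add: e_def gv_def if_distrib sum.delta cong: if_cong)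
    have s2: "(\<Sum>i\<le>Suc N. e i * (fv N L \<zeta> i - sqnorm N (gv N L \<zeta> i) / (2 * L))) = 0"
      by (simp add: e_def fv_def gv_def sqnorm_def if_distrib sum.delta cong: if_cong)
    show ?thesis unfolding wfun_def s1 s2 by (simp add: y0_def sqnorm_def)
  qed
  moreover have "wfun N L \<zeta> y0 (\<lambda>_. 0) e \<in> A y0"
    unfolding A_def
    by (rule CollectI, rule exI[of _ "\<lambda>_. 0"], rule exI[of _ e]) (auto simp: e_def sum.delta)
  ultimately have "Wfun N L \<zeta> y0 \<le> 0" unfolding W using bdd by (metis cInf_lower)
  moreover have "Wstar N L \<zeta> \<le> Wfun N L \<zeta> y0" unfolding Wstar_def
    using W0 by (intro cInf_lower) (auto simp: bdd_below_def)
  moreover have "fv N L \<zeta> k \<le> Wfun N L \<zeta> ybar" unfolding W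
    using ne unfolding A_def
    by (intro cInf_greatest) (auto intro!: wlow[where y=ybar, OF assms(2,3,4,5,6)])
  ultimately show ?thesis by linarith
qed

end
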